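(* Let $\kappa,\lambda$ be cardinals. If a locally convex space $E$ is $(\kappa,\lambda)_p$-equiconvergent, then the bornology of $E$ is $(\kappa,\lambda)$-tall.
   Context: A topological space $X$ is $(\kappa,\lambda)_p$-equiconvergent at a point $x$ if for every indexed family $\{x_\alpha\}_{\alpha\in\kappa}$ of sequences $x_\alpha\in X^\omega$ converging to $x$ there exists $\Lambda\subseteq\kappa$ with $|\Lambda|=\lambda$ such that for every neighborhood $O_x$ of $x$ there is $n\in\omega$ for which the set $\{\alpha\in\Lambda: x_\alpha(n)\notin O_x\}$ is finite; $X$ is $(\kappa,\lambda)_p$-equiconvergent if it is so at every point. A subset $B$ of a topological vector space is bounded if for every neighborhood $U$ of zero there is $n\in\mathbb N$ with $B\subseteq nU$. The bornology of $E$ is $(\kappa,\lambda)$-tall if every subset $A\subseteq E$ of cardinality $\kappa$ contains a bounded subset $B\subseteq A$ of cardinality $\lambda$. *)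

theory Defs
  imports "HOL-Analysis.Analysis" "HOL-Library.Equipollence"
begin

definition locally_convex_space :: "'a::real_vector topology \<Rightarrow> bool" where
  "locally_convex_space T \<longleftrightarrow>
     topspace T = UNIV \<and>
     continuous_map (prod_topology T T) T (\<lambda>(x, y). x + y) \<and>
     continuous_map (prod_topology euclideanreal T) T (\<lambda>(c, x). c *\<^sub>R x) \<and>
     (\<forall>x U. openin T U \<and> x \<in> U \<longrightarrow> (\<exists>V. openin T V \<and> convex V \<and> x \<in> V \<and> V \<subseteq> U))"

definition nhd_in :: "'a topology \<Rightarrow> 'a \<Rightarrow> 'a set \<Rightarrow> bool" where
  "nhd_in T x W \<longleftrightarrow> (\<exists>U. openin T U \<and> x \<in> U \<and> U \<subseteq> W)"

text \<open>Cardinals kappa, lambda are represented by sets K, L (cardinality = equipollence class).\<close>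
definition equiconvergent_at :: "'a topology \<Rightarrow> 'k set \<Rightarrow> 'l set \<Rightarrow> 'a \<Rightarrow> bool" where
  "equiconvergent_at T K L x \<longleftrightarrow>
     (\<forall>s :: 'k \<Rightarrow> nat \<Rightarrow> 'a.
        (\<forall>\<alpha>\<in>K. (\<forall>n. s \<alpha> n \<in> topspace T) \<and> limitin T (s \<alpha>) x sequentially) \<longrightarrow>
        (\<exists>\<Lambda>. \<Lambda> \<subseteq> K \<and> \<Lambda> \<approx> L \<and>
           (\<forall>W. nhd_in T x W \<longrightarrow> (\<exists>n. finite {\<alpha>\<in>\<Lambda>. s \<alpha> n \<notin> W}))))"

definition equiconvergent :: "'a topology \<Rightarrow> 'k set \<Rightarrow> 'l set \<Rightarrow> bool" where
  "equiconvergent T K L \<longleftrightarrow> (\<forall>x\<in>topspace T. equiconvergent_at T K L x)"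

definition tvs_bounded :: "'a::real_vector topology \<Rightarrow> 'a set \<Rightarrow> bool" where
  "tvs_bounded T B \<longleftrightarrow>
     (\<forall>U. nhd_in T 0 U \<longrightarrow> (\<exists>n::nat. n \<ge> 1 \<and> B \<subseteq> (\<lambda>v. real n *\<^sub>R v) ` U))"

definition tall_bornology :: "'a::real_vector topology \<Rightarrow> 'k set \<Rightarrow> 'l set \<Rightarrow> bool" where
  "tall_bornology T K L \<longleftrightarrow>
     (\<forall>A. A \<subseteq> topspace T \<and> A \<approx> K \<longrightarrow> (\<exists>B. B \<subseteq> A \<and> tvs_bounded T B \<and> B \<approx> L))"

end

theory Submission
  imports Defs
begin

lemma scal_lim:
  assumes "locally_convex_space T"
  shows "limitin T (\<lambda>n. inverse (real (Suc n)) *\<^sub>R b) 0 sequentially"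
proof -
  have c: "continuous_map (prod_topology euclideanreal T) T (\<lambda>(c, x). c *\<^sub>R x)"
    and ts: "topspace T = UNIV" using assms unfolding locally_convex_space_def by auto
  have p: "continuous_map euclideanreal (prod_topology euclideanreal T) (\<lambda>c. (c, b))"
    by (simp add: continuous_map_pairwise ts o_def)
  have g: "continuous_map euclideanreal T (\<lambda>c. c *\<^sub>R b)"
    using continuous_map_compose[OF p c] by (simp add: o_def)
  have "limitin euclideanreal (\<lambda>n. inverse (real (Suc n))) 0 sequentially"
    using LIMSEQ_inverse_real_of_nat by simp
  from continuous_map_limit[OF g this] show ?thesis by (simp add: o_def)
qed

lemma star:
  assumes "convex V" "0 \<in> V" "inverse (real (Suc k)) *\<^sub>R b \<in> V" "k \<le> M"
  shows "inverse (real (Suc M)) *\<^sub>R b \<in> V"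
proof -
  let ?u = "real (Suc k) / real (Suc M)"
  have X: "?u *\<^sub>R (inverse (real (Suc k)) *\<^sub>R b) + (1 - ?u) *\<^sub>R 0 \<in> V"
    using convexD[OF assms(1) assms(3) assms(2), of ?u "1 - ?u"] assms(4) by auto
  have E: "?u *\<^sub>R (inverse (real (Suc k)) *\<^sub>R b) = inverse (real (Suc M)) *\<^sub>R b"
    by (simp add: field_simps)
  from X show ?thesis unfolding scaleR_zero_right add_0_right E .
qed

theorem proposition3p3:
  fixes T :: "'a::real_vector topology" and K :: "'k set" and L :: "'l set"
  assumes "locally_convex_space T"
    and "equiconvergent T K L"
  shows "tall_bornology T K L"
  unfolding tall_bornology_def
proof (intro allI impI)
  fix A assume A: "A \<subseteq> topspace T \<and> A \<approx> K"
  have ts: "topspace T = UNIV" using assms(1) unfolding locally_convex_space_def by auto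
  from A have "K \<approx> A" using eqpoll_sym by blast
  then obtain g where g: "bij_betw g K A" unfolding eqpoll_def by blast
  define s where "s = (\<lambda>\<alpha> n. inverse (real (Suc n)) *\<^sub>R g \<alpha>)"
  have "equiconvergent_at T K L 0" using assms(2) ts unfolding equiconvergent_def by auto
  moreover have "\<forall>\<alpha>\<in>K. (\<forall>n. s \<alpha> n \<in> topspace T) \<and> limitin T (s \<alpha>) 0 sequentially"
    using scal_lim[OF assms(1)] ts unfolding s_def by auto
  ultimately obtain \<Lambda> where La: "\<Lambda> \<subseteq> K" "\<Lambda> \<approx> L"
    and eq: "\<And>W. nhd_in T 0 W \<Longrightarrow> (\<exists>n. finite {\<alpha>\<in>\<Lambda>. s \<alpha> n \<notin> W})"
    unfolding equiconvergent_at_def by blast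
  show "\<exists>B. B \<subseteq> A \<and> tvs_bounded T B \<and> B \<approx> L"
  proof (intro exI conjI)
    show "g ` \<Lambda> \<subseteq> A" using g La(1) bij_betw_imp_surj_on by blast
    have "inj_on g \<Lambda>" using g La(1) bij_betw_imp_inj_on inj_on_subset by blast
    then have "g ` \<Lambda> \<approx> \<Lambda>" by (simp add: inj_on_image_eqpoll_self)
    then show "g ` \<Lambda> \<approx> L" using La(2) eqpoll_trans by blast
    show "tvs_bounded T (g ` \<Lambda>)"
      unfolding tvs_bounded_def
    proof (intro allI impI)
      fix U assume "nhd_in T 0 U"
      then obtain U0 where U0: "openin T U0" "0 \<in> U0" "U0 \<subseteq> U" unfolding nhd_in_def by blast
      have lc: "\<forall>x U. openin T U \<and> x \<in> U \<longrightarrow> (\<exists>V. openin T V \<and> convex V \<and> x \<in> V \<and> V \<subseteq> U)"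
        using assms(1) unfolding locally_convex_space_def by blast
      obtain V0 where V0: "openin T V0" "convex V0" "0 \<in> V0" "V0 \<subseteq> U0"
        using lc[rule_format, of U0 0] U0(1,2) by blast
      then have V: "openin T V0" "convex V0" "0 \<in> V0" "V0 \<subseteq> U" using U0(3) by auto
      define V where "V = V0"
      note V = V[folded V_def]
      have "nhd_in T 0 V" using V unfolding nhd_in_def by blast
      then obtain n where fin: "finite {\<alpha>\<in>\<Lambda>. s \<alpha> n \<notin> V}" using eq by blast
      define F where "F = {\<alpha>\<in>\<Lambda>. s \<alpha> n \<notin> V}"
      have "\<forall>\<alpha>\<in>F. \<exists>k. s \<alpha> k \<in> V"
      proof
        fix \<alpha> assume "\<alpha> \<in> F"
        have "limitin T (s \<alpha>) 0 sequentially" using scal_lim[OF assms(1)] unfolding s_def .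
        then have "eventually (\<lambda>k. s \<alpha> k \<in> V) sequentially"
          using V unfolding limitin_def by blast
        then show "\<exists>k. s \<alpha> k \<in> V" by (meson eventually_sequentially order_refl)
      qed
      then obtain kf where kf: "\<And>\<alpha>. \<alpha> \<in> F \<Longrightarrow> s \<alpha> (kf \<alpha>) \<in> V" by metis
      define M where "M = max n (Max (kf ` F))"
      have all: "\<forall>\<alpha>\<in>\<Lambda>. s \<alpha> M \<in> V"
      proof
        fix \<alpha> assume a: "\<alpha> \<in> \<Lambda>"
        show "s \<alpha> M \<in> V"
        proof (cases "\<alpha> \<in> F")
          case True
          have "kf \<alpha> \<le> Max (kf ` F)" using fin True F_def by (intro Max_ge) auto
          then have "kf \<alpha> \<le> M" unfolding M_def by auto
          then show ?thesis using star[OF V(2) V(3)] kf[OF True] unfolding s_def by blast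
        next
          case False
          then have "s \<alpha> n \<in> V" using a F_def by auto
          moreover have "n \<le> M" unfolding M_def by auto
          ultimately show ?thesis using star[OF V(2) V(3)] unfolding s_def by blast
        qed
      qed
      show "\<exists>m::nat. m \<ge> 1 \<and> g ` \<Lambda> \<subseteq> (\<lambda>v. real m *\<^sub>R v) ` U"
      proof (intro exI conjI)
        show "Suc M \<ge> 1" by simp
        show "g ` \<Lambda> \<subseteq> (\<lambda>v. real (Suc M) *\<^sub>R v) ` U"
        proof
          fix y assume "y \<in> g ` \<Lambda>"
          then obtain \<alpha> where a: "\<alpha> \<in> \<Lambda>" "y = g \<alpha>" by blast
          have "s \<alpha> M \<in> U" using all a V(4) by blast
          moreover have "y = real (Suc M) *\<^sub>R s \<alpha> M" using a unfolding s_def by simp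
          ultimately show "y \<in> (\<lambda>v. real (Suc M) *\<^sub>R v) ` U" by blast
        qed
      qed
    qed
  qed
qed

end
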